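(* Let $\mu$ be a joint distribution of a triple $(X,A,Y)$ with $X\in\mathcal{X}\subseteq\mathbb{R}^d$, $A\in\{0,1\}$ with $\Pr(A=0),\Pr(A=1)>0$, and $Y\in[-1,1]$. Let $h:\mathcal{X}\to\mathbb{R}$ be measurable and $\widehat{Y}=h(X)$. If $\widehat{Y}$ is statistically independent of $A$, then $$\varepsilon_{1,\mu_0}(\widehat{Y})+\varepsilon_{1,\mu_1}(\widehat{Y})\geq|\mathbb{E}_{\mu_0}[Y]-\mathbb{E}_{\mu_1}[Y]|$$ and $$\varepsilon^2_{2,\mu_0}(\widehat{Y})+\varepsilon^2_{2,\mu_1}(\widehat{Y})\geq\tfrac{1}{2}|\mathbb{E}_{\mu_0}[Y]-\mathbb{E}_{\mu_1}[Y]|^2.$$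
   Context: For $a\in\{0,1\}$, $\mu_a$ is the conditional distribution of $(X,Y)$ given $A=a$. For a distribution $\nu$ and $p\ge1$, $\varepsilon_{p,\nu}(\widehat{Y}):=\left(\mathbb{E}_\nu[|\widehat{Y}-Y|^p]\right)^{1/p}$. *)

theory Defs
  imports "HOL-Probability.Probability"
begin

definition cond_dist ::
  "'w measure \<Rightarrow> ('w \<Rightarrow> 'x::topological_space) \<Rightarrow> ('w \<Rightarrow> real) \<Rightarrow> ('w \<Rightarrow> real) \<Rightarrow> real
     \<Rightarrow> ('x \<times> real) measure" where
  "cond_dist M X A Y a =
     distr (uniform_measure M {w \<in> space M. A w = a}) (borel \<Otimes>\<^sub>M borel) (\<lambda>w. (X w, Y w))"

definition err :: "real \<Rightarrow> ('x \<times> real) measure \<Rightarrow> ('x \<Rightarrow> real) \<Rightarrow> ennreal" where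
  "err p \<nu> h =
     (let I = (\<integral>\<^sup>+ z. ennreal (\<bar>h (fst z) - snd z\<bar> powr p) \<partial>\<nu>)
      in if I = \<infinity> then \<infinity> else ennreal (enn2real I powr (1 / p)))"

end

theory Submission
  imports Defs
begin


lemma helper1:
  fixes Z :: "'a \<Rightarrow> real"
  assumes "prob_space N" "Z \<in> borel_measurable N" "(\<integral>\<^sup>+x. ennreal \<bar>Z x\<bar> \<partial>N) \<noteq> \<infinity>"
  shows "integrable N Z" "(\<integral>\<^sup>+x. ennreal \<bar>Z x\<bar> \<partial>N) = ennreal (\<integral>x. \<bar>Z x\<bar> \<partial>N)"
    "\<bar>\<integral>x. Z x \<partial>N\<bar> \<le> (\<integral>x. \<bar>Z x\<bar> \<partial>N)"
proof -
  show i: "integrable N Z" using assms by (simp add: integrable_iff_bounded less_top)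
  show "(\<integral>\<^sup>+x. ennreal \<bar>Z x\<bar> \<partial>N) = ennreal (\<integral>x. \<bar>Z x\<bar> \<partial>N)"
    using i by (intro nn_integral_eq_integral) auto
  show "\<bar>\<integral>x. Z x \<partial>N\<bar> \<le> (\<integral>x. \<bar>Z x\<bar> \<partial>N)"
    using integral_abs_bound by blast
qed

lemma helper2:
  fixes Z :: "'a \<Rightarrow> real"
  assumes "prob_space N" "Z \<in> borel_measurable N" "(\<integral>\<^sup>+x. ennreal ((Z x)\<^sup>2) \<partial>N) \<noteq> \<infinity>"
  shows "integrable N Z" "(\<integral>\<^sup>+x. ennreal ((Z x)\<^sup>2) \<partial>N) = ennreal (\<integral>x. (Z x)\<^sup>2 \<partial>N)"
    "(\<integral>x. Z x \<partial>N)\<^sup>2 \<le> (\<integral>x. (Z x)\<^sup>2 \<partial>N)"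
proof -
  interpret prob_space N by fact
  have i2: "integrable N (\<lambda>x. (Z x)\<^sup>2)" using assms by (simp add: integrable_iff_bounded less_top)
  show i: "integrable N Z" using i2 assms(2) by (blast dest: square_integrable_imp_integrable)
  show "(\<integral>\<^sup>+x. ennreal ((Z x)\<^sup>2) \<partial>N) = ennreal (\<integral>x. (Z x)\<^sup>2 \<partial>N)"
    using i2 by (intro nn_integral_eq_integral) auto
  show "(\<integral>x. Z x \<partial>N)\<^sup>2 \<le> (\<integral>x. (Z x)\<^sup>2 \<partial>N)"
    using variance_eq[OF i i2] variance_positive[of Z] by simp
qed



definition errW :: "real \<Rightarrow> 'a measure \<Rightarrow> ('a \<Rightarrow> real) \<Rightarrow> ('a \<Rightarrow> real) \<Rightarrow> ennreal" where
  "errW p N G Y = (let I = (\<integral>\<^sup>+ w. ennreal (\<bar>G w - Y w\<bar> powr p) \<partial>N)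
      in if I = \<infinity> then \<infinity> else ennreal (enn2real I powr (1 / p)))"

lemma side1:
  assumes N: "prob_space N" and G: "G \<in> borel_measurable N" and Ym: "Y \<in> borel_measurable N"
    and Yb: "\<And>w. w \<in> space N \<Longrightarrow> \<bar>Y w\<bar> \<le> 1"
    and fin: "errW 1 N G Y \<noteq> \<infinity>"
  shows "\<exists>D. errW 1 N G Y = ennreal D \<and> \<bar>(\<integral>w. Y w \<partial>N) - (\<integral>w. G w \<partial>N)\<bar> \<le> D"
proof -
  interpret prob_space N by fact
  let ?Z = "\<lambda>w. G w - Y w"
  have I: "(\<integral>\<^sup>+ w. ennreal \<bar>?Z w\<bar> \<partial>N) \<noteq> \<infinity>"
    using fin unfolding errW_def Let_def by (auto split: if_splits)
  have Zm: "?Z \<in> borel_measurable N" using G Ym by measurable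
  note h = helper1[OF N Zm I]
  have iY: "integrable N Y"
    using Ym Yb by (intro integrable_const_bound[where B=1]) auto
  have iG: "integrable N G"
  proof -
    have "integrable N (\<lambda>w. ?Z w + Y w)" using Bochner_Integration.integrable_add[OF h(1) iY] .
    then show ?thesis by simp
  qed
  have eq: "(\<integral>w. ?Z w \<partial>N) = (\<integral>w. G w \<partial>N) - (\<integral>w. Y w \<partial>N)"
    using iG iY by simp
  have "errW 1 N G Y = ennreal (\<integral>w. \<bar>?Z w\<bar> \<partial>N)"
    using fin I h(2) unfolding errW_def Let_def
    by (simp add: integral_nonneg_AE)
  moreover have "\<bar>(\<integral>w. Y w \<partial>N) - (\<integral>w. G w \<partial>N)\<bar> \<le> (\<integral>w. \<bar>?Z w\<bar> \<partial>N)"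
    using h(3) eq by simp
  ultimately show ?thesis by blast
qed

lemma side2:
  assumes N: "prob_space N" and G: "G \<in> borel_measurable N" and Ym: "Y \<in> borel_measurable N"
    and Yb: "\<And>w. w \<in> space N \<Longrightarrow> \<bar>Y w\<bar> \<le> 1"
    and fin: "errW 2 N G Y \<noteq> \<infinity>"
  shows "\<exists>D. (errW 2 N G Y)\<^sup>2 = ennreal D \<and> ((\<integral>w. Y w \<partial>N) - (\<integral>w. G w \<partial>N))\<^sup>2 \<le> D"
proof -
  interpret prob_space N by fact
  let ?Z = "\<lambda>w. G w - Y w"
  have pw: "\<And>w. \<bar>?Z w\<bar> powr 2 = (?Z w)\<^sup>2" by simp
  have I: "(\<integral>\<^sup>+ w. ennreal ((?Z w)\<^sup>2) \<partial>N) \<noteq> \<infinity>"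
    using fin unfolding errW_def Let_def pw by (auto split: if_splits)
  have Zm: "?Z \<in> borel_measurable N" using G Ym by measurable
  note h = helper2[OF N Zm I]
  have iY: "integrable N Y"
    using Ym Yb by (intro integrable_const_bound[where B=1]) auto
  have iG: "integrable N G"
  proof -
    have "integrable N (\<lambda>w. ?Z w + Y w)" using Bochner_Integration.integrable_add[OF h(1) iY] .
    then show ?thesis by simp
  qed
  have eq: "(\<integral>w. ?Z w \<partial>N) = (\<integral>w. G w \<partial>N) - (\<integral>w. Y w \<partial>N)"
    using iG iY by simp
  have nn: "0 \<le> (\<integral>w. (?Z w)\<^sup>2 \<partial>N)" by (simp add: integral_nonneg_AE)
  have "errW 2 N G Y = ennreal ((\<integral>w. (?Z w)\<^sup>2 \<partial>N) powr (1/2))"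
    using fin I h(2) nn unfolding errW_def Let_def pw
    by simp
  then have "(errW 2 N G Y)\<^sup>2 = ennreal (\<integral>w. (?Z w)\<^sup>2 \<partial>N)"
    using nn by (simp add: ennreal_power powr_half_sqrt)
  moreover have "((\<integral>w. Y w \<partial>N) - (\<integral>w. G w \<partial>N))\<^sup>2 \<le> (\<integral>w. (?Z w)\<^sup>2 \<partial>N)"
    using h(3) eq by (simp add: power2_commute)
  ultimately show ?thesis by blast
qed

lemma core:
  assumes N0: "prob_space N0" and G0: "G \<in> borel_measurable N0" and Y0: "Y \<in> borel_measurable N0"
    and Yb0: "\<And>w. w \<in> space N0 \<Longrightarrow> \<bar>Y w\<bar> \<le> 1"
  assumes N1: "prob_space N1" and G1: "G \<in> borel_measurable N1" and Y1: "Y \<in> borel_measurable N1"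
    and Yb1: "\<And>w. w \<in> space N1 \<Longrightarrow> \<bar>Y w\<bar> \<le> 1"
    and c: "(\<integral>w. G w \<partial>N0) = (\<integral>w. G w \<partial>N1)"
  shows "errW 1 N0 G Y + errW 1 N1 G Y \<ge> ennreal \<bar>(\<integral>w. Y w \<partial>N0) - (\<integral>w. Y w \<partial>N1)\<bar>"
    and "(errW 2 N0 G Y)\<^sup>2 + (errW 2 N1 G Y)\<^sup>2 \<ge> ennreal (1/2 * \<bar>(\<integral>w. Y w \<partial>N0) - (\<integral>w. Y w \<partial>N1)\<bar>\<^sup>2)"
proof -
  let ?d = "\<bar>(\<integral>w. Y w \<partial>N0) - (\<integral>w. Y w \<partial>N1)\<bar>"
  let ?c = "\<integral>w. G w \<partial>N0"
  show "errW 1 N0 G Y + errW 1 N1 G Y \<ge> ennreal ?d"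
  proof (cases "errW 1 N0 G Y = \<infinity> \<or> errW 1 N1 G Y = \<infinity>")
    case True then have s: "errW 1 N0 G Y + errW 1 N1 G Y = \<top>" by (elim disjE) simp_all
    show ?thesis unfolding s by (rule top_greatest)
  next
    case False
    then obtain D0 D1 where d0: "errW 1 N0 G Y = ennreal D0" "\<bar>(\<integral>w. Y w \<partial>N0) - ?c\<bar> \<le> D0"
      and d1: "errW 1 N1 G Y = ennreal D1" "\<bar>(\<integral>w. Y w \<partial>N1) - ?c\<bar> \<le> D1"
      using side1[OF N0 G0 Y0 Yb0] side1[OF N1 G1 Y1 Yb1] c by metis
    have "?d \<le> D0 + D1" using d0(2) d1(2) by linarith
    moreover have "0 \<le> D0" "0 \<le> D1" using d0(2) d1(2) by linarith+
    ultimately have "ennreal ?d \<le> ennreal (D0 + D1)" by (intro ennreal_leI) simp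
    also have "\<dots> = ennreal D0 + ennreal D1" using \<open>0 \<le> D0\<close> \<open>0 \<le> D1\<close> by (rule ennreal_plus)
    finally show ?thesis using d0(1) d1(1) by simp
  qed
  show "(errW 2 N0 G Y)\<^sup>2 + (errW 2 N1 G Y)\<^sup>2 \<ge> ennreal (1/2 * ?d\<^sup>2)"
  proof (cases "errW 2 N0 G Y = \<infinity> \<or> errW 2 N1 G Y = \<infinity>")
    case True then have s: "(errW 2 N0 G Y)\<^sup>2 + (errW 2 N1 G Y)\<^sup>2 = \<top>"
      by (elim disjE) simp_all
    show ?thesis unfolding s by (rule top_greatest)
  next
    case False
    then obtain D0 D1 where d0: "(errW 2 N0 G Y)\<^sup>2 = ennreal D0" "((\<integral>w. Y w \<partial>N0) - ?c)\<^sup>2 \<le> D0"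
      and d1: "(errW 2 N1 G Y)\<^sup>2 = ennreal D1" "((\<integral>w. Y w \<partial>N1) - ?c)\<^sup>2 \<le> D1"
      using side2[OF N0 G0 Y0 Yb0] side2[OF N1 G1 Y1 Yb1] c by metis
    have alg: "1/2 * ?d\<^sup>2 \<le> ((\<integral>w. Y w \<partial>N0) - ?c)\<^sup>2 + ((\<integral>w. Y w \<partial>N1) - ?c)\<^sup>2"
    proof -
      have "\<And>a b c::real. 1/2 * \<bar>a - b\<bar>\<^sup>2 \<le> (a - c)\<^sup>2 + (b - c)\<^sup>2"
      proof -
        fix a b c :: real
        have "(a - c)\<^sup>2 + (b - c)\<^sup>2 - 1/2 * \<bar>a - b\<bar>\<^sup>2 = 1/2 * (a + b - 2*c)\<^sup>2"
          by (simp add: power2_eq_square algebra_simps)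
        then show "1/2 * \<bar>a - b\<bar>\<^sup>2 \<le> (a - c)\<^sup>2 + (b - c)\<^sup>2"
          using zero_le_power2[of "a + b - 2*c"] by linarith
      qed
      then show ?thesis by blast
    qed
    have "0 \<le> D0" "0 \<le> D1" using d0(2) d1(2) by (meson order_trans zero_le_power2)+
    have "1/2 * ?d\<^sup>2 \<le> D0 + D1" using alg d0(2) d1(2) by linarith
    then have "ennreal (1/2 * ?d\<^sup>2) \<le> ennreal (D0 + D1)" by (intro ennreal_leI)
    also have "\<dots> = ennreal D0 + ennreal D1" using \<open>0 \<le> D0\<close> \<open>0 \<le> D1\<close> by (rule ennreal_plus)
    finally show ?thesis using d0(1) d1(1) by simp
  qed
qed



theorem corollary1:
  fixes M :: "'w measure"
    and X :: "'w \<Rightarrow> real ^ 'd"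
    and A :: "'w \<Rightarrow> real"
    and Y :: "'w \<Rightarrow> real"
    and h :: "real ^ 'd \<Rightarrow> real"
  assumes "prob_space M"
    and "X \<in> borel_measurable M"
    and "A \<in> borel_measurable M"
    and "Y \<in> borel_measurable M"
    and "\<And>w. w \<in> space M \<Longrightarrow> A w \<in> {0, 1}"
    and "\<And>w. w \<in> space M \<Longrightarrow> \<bar>Y w\<bar> \<le> 1"
    and "measure M {w \<in> space M. A w = 0} > 0"
    and "measure M {w \<in> space M. A w = 1} > 0"
    and "h \<in> borel_measurable borel"
    and "prob_space.indep_var M (borel :: real measure) (\<lambda>w. h (X w)) (borel :: real measure) A"
  shows "(err 1 (cond_dist M X A Y 0) h + err 1 (cond_dist M X A Y 1) h
           \<ge> ennreal \<bar>(\<integral>z. snd z \<partial>cond_dist M X A Y 0) - (\<integral>z. snd z \<partial>cond_dist M X A Y 1)\<bar>)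
         \<and> ((err 2 (cond_dist M X A Y 0) h)\<^sup>2 + (err 2 (cond_dist M X A Y 1) h)\<^sup>2
           \<ge> ennreal (1/2 * \<bar>(\<integral>z. snd z \<partial>cond_dist M X A Y 0) - (\<integral>z. snd z \<partial>cond_dist M X A Y 1)\<bar>\<^sup>2))"
  proof -
  interpret M: prob_space M by fact
  note [measurable] = assms(2,3,4,9)
  define S where "S a = {w \<in> space M. A w = a}" for a
  define N where "N a = uniform_measure M (S a)" for a
  define G where "G w = h (X w)" for w
  have G_meas[measurable]: "G \<in> borel_measurable M" unfolding G_def by measurable
  have Ssets: "S a \<in> sets M" for a unfolding S_def by measurable
  have Sgt: "0 < measure M (S a)" if "a \<in> {0,1}" for a
    using assms(7,8) that unfolding S_def by auto
  have Nprob: "prob_space (N a)" if "a \<in> {0,1}" for a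
    unfolding N_def
  proof (rule prob_space_uniform_measure)
    show "emeasure M (S a) \<noteq> 0" using Sgt[OF that] by (simp add: M.emeasure_eq_measure)
    show "emeasure M (S a) \<noteq> \<infinity>" by (simp add: M.emeasure_eq_measure)
  qed
  have sN[measurable_cong]: "sets (N a) = sets M" for a unfolding N_def by simp
  have spN: "space (N a) = space M" for a unfolding N_def by simp
  have cd: "cond_dist M X A Y a = distr (N a) (borel \<Otimes>\<^sub>M borel) (\<lambda>w. (X w, Y w))" for a
    unfolding cond_dist_def N_def S_def ..
  have pm: "(\<lambda>w. (X w, Y w)) \<in> measurable (N a) (borel \<Otimes>\<^sub>M borel)" for a
    by measurable
  have errEq: "err p (cond_dist M X A Y a) h = errW p (N a) G Y" for p a
  proof -
    have fm: "(\<lambda>z. ennreal (\<bar>h (fst z) - snd z\<bar> powr p)) \<in> borel_measurable (distr (N a) (borel \<Otimes>\<^sub>M borel) (\<lambda>w. (X w, Y w)))"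
      by (subst measurable_cong_sets[OF sets_distr refl]) measurable
    have "(\<integral>\<^sup>+ z. ennreal (\<bar>h (fst z) - snd z\<bar> powr p) \<partial>cond_dist M X A Y a)
       = (\<integral>\<^sup>+ w. ennreal (\<bar>G w - Y w\<bar> powr p) \<partial>N a)"
      unfolding cd G_def by (simp add: nn_integral_distr[OF pm fm])
    then show ?thesis unfolding err_def errW_def by simp
  qed
  have intEq: "(\<integral>z. snd z \<partial>cond_dist M X A Y a) = (\<integral>w. Y w \<partial>N a)" for a
    unfolding cd by (simp add: integral_distr[OF pm])
  have distrEq: "distr (N a) borel G = distr M borel G" if a: "a \<in> {0,1}" for a
  proof (rule measure_eqI)
    show "sets (distr (N a) borel G) = sets (distr M borel G)" by simp
    fix B assume "B \<in> sets (distr (N a) borel G)"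
    then have B: "B \<in> sets borel" by simp
    have GN: "G \<in> measurable (N a) borel" by measurable
    have pre: "G -` B \<inter> space M \<in> sets M" using B by measurable
    have setid: "S a \<inter> (G -` B \<inter> space M) = (\<lambda>x. (G x, A x)) -` (B \<times> {a}) \<inter> space M"
      unfolding S_def by auto
    have setid2: "S a = A -` {a} \<inter> space M" unfolding S_def by auto
    have ind: "M.indep_var borel G borel A" using assms(10) unfolding G_def by simp
    have "measure M (S a \<inter> (G -` B \<inter> space M)) = measure M (G -` B \<inter> space M) * measure M (S a)"
      unfolding setid by (subst setid2, rule M.indep_varD[OF ind B]) simp
    then have "emeasure (N a) (G -` B \<inter> space M) = emeasure M (G -` B \<inter> space M)"
      unfolding N_def using Sgt[OF a] Ssets pre
      by (simp add: M.emeasure_eq_measure divide_ennreal)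
    then show "emeasure (distr (N a) borel G) B = emeasure (distr M borel G) B"
      using B GN by (simp add: emeasure_distr spN)
  qed
  have GEq: "(\<integral>w. G w \<partial>N 0) = (\<integral>w. G w \<partial>N 1)"
  proof -
    have "(\<integral>w. G w \<partial>N a) = (\<integral>x. x \<partial>distr M borel G)" if "a \<in> {0,1}" for a
    proof -
      have GN: "G \<in> measurable (N a) borel" by measurable
      have "(\<integral>x. x \<partial>distr (N a) borel G) = (\<integral>w. G w \<partial>N a)"
        by (rule integral_distr[OF GN]) simp
      then show ?thesis using distrEq[OF that] by simp
    qed
    then show ?thesis by simp
  qed
  have GNm: "G \<in> borel_measurable (N a)" for a by measurable
  have YNm: "Y \<in> borel_measurable (N a)" for a by measurable
  have Yb: "\<And>w. w \<in> space (N a) \<Longrightarrow> \<bar>Y w\<bar> \<le> 1" for a using assms(6) spN by simp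
  note c = core[OF Nprob GNm YNm Yb Nprob GNm YNm Yb GEq]
  show ?thesis unfolding errEq intEq using c by simp
qed

end
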